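(* Let $a,n,b,p,k$ be positive integers with $a>b$. If there exist a partition of $\{1,\dots,p\}$ into $k$ sum-free subsets and a $b$-WS-template $(A_1,\dots,A_{n+1})$ with width $a$ and $n+1$ colors, then there exists a partition of $\{1,\dots,pa+b\}$ into $k+n$ weakly sum-free subsets.
   Context: A set $A \subseteq \mathbb{N}$ is sum-free if for all $(a,b)\in A^2$ (allowing $a=b$), $a+b \notin A$; it is weakly sum-free if for all $(a,b)\in A^2$ with $a\neq b$, $a+b\notin A$. For positive integers $a>b$, let $\pi(x) = (x \bmod a) + a\cdot \mathbb{1}_{\{0,\dots,b\}}(x \bmod a)$. For positive integers $a,m,b$ with $a>b$, a partition $(A_1,\dots,A_m)$ of $\{1,\dots,a+b\}$ is a $b$-WS-template with width $a$ and $m$ colors if: (i) every $A_i$ is weakly sum-free; (ii) every $A_i\setminus\{1,\dots,b\}$ is sum-free; (iii) for all $(x,y)\in A_m^2$, $x+y>b+2a$ implies $x+y-2a\notin A_m$; (iv) for all $i\in\{1,\dots,m-1\}$ and $(x,y)\in A_i^2$, $x+y>a+b$ implies $\pi(x+y)\notin A_i$. *)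

theory Defs
  imports Main
begin

definition sum_free :: "nat set \<Rightarrow> bool" where
  "sum_free A \<longleftrightarrow> (\<forall>a\<in>A. \<forall>b\<in>A. a + b \<notin> A)"

definition weakly_sum_free :: "nat set \<Rightarrow> bool" where
  "weakly_sum_free A \<longleftrightarrow> (\<forall>a\<in>A. \<forall>b\<in>A. a \<noteq> b \<longrightarrow> a + b \<notin> A)"

definition is_partition :: "nat set \<Rightarrow> nat \<Rightarrow> (nat \<Rightarrow> nat set) \<Rightarrow> bool" where
  "is_partition S m A \<longleftrightarrow>
     (\<Union>i\<in>{1..m}. A i) = S \<and>
     (\<forall>i\<in>{1..m}. \<forall>j\<in>{1..m}. i \<noteq> j \<longrightarrow> A i \<inter> A j = {})"

definition pi_map :: "nat \<Rightarrow> nat \<Rightarrow> nat \<Rightarrow> nat" where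
  "pi_map a b x = x mod a + (if x mod a \<in> {0..b} then a else 0)"

definition WS_template :: "nat \<Rightarrow> nat \<Rightarrow> nat \<Rightarrow> (nat \<Rightarrow> nat set) \<Rightarrow> bool" where
  "WS_template b a m A \<longleftrightarrow>
     0 < a \<and> 0 < m \<and> 0 < b \<and> b < a \<and>
     is_partition {1..a+b} m A \<and>
     (\<forall>i\<in>{1..m}. weakly_sum_free (A i)) \<and>
     (\<forall>i\<in>{1..m}. sum_free (A i - {1..b})) \<and>
     (\<forall>x\<in>A m. \<forall>y\<in>A m. x + y > b + 2*a \<longrightarrow> x + y - 2*a \<notin> A m) \<and>
     (\<forall>i\<in>{1..m-1}. \<forall>x\<in>A i. \<forall>y\<in>A i. x + y > a + b \<longrightarrow> pi_map a b (x + y) \<notin> A i)"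

end

theory Submission
  imports Defs
begin

definition tt :: "nat \<Rightarrow> nat \<Rightarrow> nat \<Rightarrow> nat" where
  "tt a b x = (if x \<le> a+b then 0 else (x-b-1) div a)"
definition rr :: "nat \<Rightarrow> nat \<Rightarrow> nat \<Rightarrow> nat" where
  "rr a b x = x - tt a b x * a"

lemma L1:
  assumes "0 < a" "b < a" "1 \<le> x"
  shows "x = tt a b x * a + rr a b x" "1 \<le> rr a b x" "rr a b x \<le> a+b"
    "rr a b x \<le> b \<Longrightarrow> x = rr a b x \<and> tt a b x = 0"
    "x \<le> a+b \<Longrightarrow> tt a b x = 0 \<and> rr a b x = x"
proof -
  have A: "tt a b x * a \<le> x \<and> x - tt a b x * a \<le> a + b \<and> (x > a+b \<longrightarrow> x - tt a b x * a > b)"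
  proof (cases "x \<le> a+b")
    case True then show ?thesis by (simp add: tt_def)
  next
    case False
    define q where "q = (x-b-1) div a"
    define r where "r = (x-b-1) mod a"
    have e: "x - b - 1 = q*a + r" using q_def r_def by simp
    have "r < a" using r_def assms by simp
    have "tt a b x = q" using False by (simp add: tt_def q_def)
    then show ?thesis using False e \<open>r < a\<close> by simp linarith
  qed
  show "x = tt a b x * a + rr a b x" using A by (simp add: rr_def)
  show "1 \<le> rr a b x" using A assms by (cases "x \<le> a+b") (auto simp: rr_def tt_def)
  show "rr a b x \<le> a+b" using A by (simp add: rr_def)
  show "rr a b x \<le> b \<Longrightarrow> x = rr a b x \<and> tt a b x = 0" using A
    by (cases "x \<le> a+b") (auto simp: rr_def tt_def)
  show "x \<le> a+b \<Longrightarrow> tt a b x = 0 \<and> rr a b x = x" by (simp add: rr_def tt_def)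
qed

lemma L2:
  assumes "0 < a" "b < a" "x \<le> p*a+b" "0 < p"
  shows "tt a b x < p"
proof (cases "x \<le> a+b")
  case True then show ?thesis using assms by (simp add: tt_def)
next
  case False
  have "x - b - 1 < p*a" using assms False by linarith
  then have "(x-b-1) div a < p" using assms by (simp add: div_less_iff_less_mult)
  then show ?thesis using False by (simp add: tt_def)
qed

lemma L3:
  assumes "0 < a" "b < a" "b < r" "r \<le> a+b" "x = t*a + r"
  shows "tt a b x = t \<and> rr a b x = r"
proof (cases "t = 0")
  case True then show ?thesis using assms by (simp add: tt_def rr_def)
next
  case False
  then have "t*a \<ge> a" using assms by simp
  then have g: "\<not> x \<le> a+b" using assms by linarith
  have "x - b - 1 = t*a + (r-b-1)" using assms by simp
  moreover have "r - b - 1 < a" using assms by linarith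
  moreover have "(t*a + c) div a = t" if "c < a" for c using that by simp
  moreover note this[OF \<open>r - b - 1 < a\<close>]
  ultimately have "(x-b-1) div a = t" by simp
  then show ?thesis using g assms by (simp add: tt_def rr_def)
qed

lemma L4:
  assumes "0 < a" "b < a" "b < v" "v \<le> a+b" "v mod a = s mod a"
  shows "pi_map a b s = v"
proof (cases "v < a")
  case True
  then have "s mod a = v" using assms by simp
  then show ?thesis using assms by (simp add: pi_map_def)
next
  case False
  then have "v mod a = v - a" using assms by (simp add: le_mod_geq)
  then show ?thesis using assms False by (simp add: pi_map_def)
qed

lemma extra_wsf:
  assumes a: "0 < a" "b < a"
    and W: "weakly_sum_free A" and S: "sum_free (A - {1..b})"
    and iv: "\<forall>x\<in>A. \<forall>y\<in>A. x + y > a + b \<longrightarrow> pi_map a b (x + y) \<notin> A"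
  shows "weakly_sum_free {x\<in>{1..N}. rr a b x \<in> A}"
  unfolding weakly_sum_free_def
proof (intro ballI impI)
  fix x y assume x: "x \<in> {x\<in>{1..N}. rr a b x \<in> A}" and y: "y \<in> {x\<in>{1..N}. rr a b x \<in> A}" and ne: "x \<noteq> y"
  show "x + y \<notin> {x\<in>{1..N}. rr a b x \<in> A}"
  proof
    assume z: "x + y \<in> {x\<in>{1..N}. rr a b x \<in> A}"
    define z where "z = x + y"
    define r1 where "r1 = rr a b x"
    define r2 where "r2 = rr a b y"
    define r3 where "r3 = rr a b z"
    define t1 where "t1 = tt a b x"
    define t2 where "t2 = tt a b y"
    define t3 where "t3 = tt a b z"
    have x1: "1 \<le> x" and y1: "1 \<le> y" using x y by auto
    have z1: "1 \<le> z" using x1 z_def by simp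
    note Lx = L1[OF a x1, folded r1_def t1_def]
    note Ly = L1[OF a y1, folded r2_def t2_def]
    note Lz = L1[OF a z1, folded r3_def t3_def]
    have A1: "r1 \<in> A" and A2: "r2 \<in> A" using x y by (auto simp: r1_def r2_def)
    have A3: "r3 \<in> A" using z unfolding r3_def z_def by simp
    show False
    proof (cases "z \<le> a+b")
      case True
      then have "x \<le> a+b" "y \<le> a+b" using z_def by auto
      then have "r1 = x" "r2 = y" "r3 = z" using Lx(5) Ly(5) Lz(5) True by auto
      then show False using W A1 A2 A3 ne z_def unfolding weakly_sum_free_def by blast
    next
      case False
      have r3b: "b < r3"
      proof (rule ccontr)
        assume "\<not> b < r3"
        then have "z = r3" using Lz(4) by simp
        then show False using False \<open>\<not> b < r3\<close> by linarith
      qed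
      have "x + y = t1*a + r1 + (t2*a + r2)" using Lx(1) Ly(1) by simp
      then have ez: "z = (t1+t2)*a + (r1+r2)" unfolding z_def by (simp add: algebra_simps)
      show False
      proof (cases "r1 + r2 > a + b")
        case True
        have "r3 mod a = (r1+r2) mod a"
        proof -
          have "z mod a = r3 mod a" using Lz(1) by (metis mod_mult_self3)
          moreover have "z mod a = (r1+r2) mod a" using ez by (metis mod_mult_self3)
          ultimately show ?thesis by simp
        qed
        then have "pi_map a b (r1+r2) = r3" using L4[OF a r3b Lz(3)] by simp
        then show False using iv A1 A2 A3 True by blast
      next
        case False
        show False
        proof (cases "r1 + r2 \<le> b")
          case True
          then have "x = r1" "y = r2" using Lx(4) Ly(4) by auto
          then have "z \<le> a+b" using True z_def by simp
          then show False using \<open>\<not> z \<le> a+b\<close> by simp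
        next
          case False
          then have "r3 = r1 + r2" using L3[OF a _ _ ez] \<open>\<not> r1 + r2 > a + b\<close> r3_def by simp
          show False
          proof (cases "r1 = r2")
            case False
            then show False using W A1 A2 A3 \<open>r3 = r1 + r2\<close> unfolding weakly_sum_free_def by blast
          next
            case True
            show False
            proof (cases "r1 \<le> b")
              case True
              then have "x = r1" "y = r2" using Lx(4) Ly(4) \<open>r1 = r2\<close> by auto
              then show False using ne \<open>r1 = r2\<close> by simp
            next
              case False
              then have "r1 \<in> A - {1..b}" "r2 \<in> A - {1..b}" "r3 \<in> A - {1..b}"
                using A1 A2 A3 \<open>r1 = r2\<close> \<open>r3 = r1 + r2\<close> by auto
              then show False using S \<open>r3 = r1 + r2\<close> unfolding sum_free_def by blast
            qed
          qed
        qed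
      qed
    qed
  qed
qed

lemma main_wsf:
  assumes a: "0 < a" "b < a"
    and W: "weakly_sum_free A" and S: "sum_free (A - {1..b})"
    and iii: "\<forall>x\<in>A. \<forall>y\<in>A. x + y > b + 2*a \<longrightarrow> x + y - 2*a \<notin> A"
    and Q: "sum_free Q"
  shows "weakly_sum_free {x\<in>{1..N}. rr a b x \<in> A \<and> tt a b x + 1 \<in> Q}"
  unfolding weakly_sum_free_def
proof (intro ballI impI)
  fix x y assume x: "x \<in> {x\<in>{1..N}. rr a b x \<in> A \<and> tt a b x + 1 \<in> Q}"
    and y: "y \<in> {x\<in>{1..N}. rr a b x \<in> A \<and> tt a b x + 1 \<in> Q}" and ne: "x \<noteq> y"
  show "x + y \<notin> {x\<in>{1..N}. rr a b x \<in> A \<and> tt a b x + 1 \<in> Q}"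
  proof
    assume z: "x + y \<in> {x\<in>{1..N}. rr a b x \<in> A \<and> tt a b x + 1 \<in> Q}"
    define z where "z = x + y"
    define r1 where "r1 = rr a b x"
    define r2 where "r2 = rr a b y"
    define r3 where "r3 = rr a b z"
    define t1 where "t1 = tt a b x"
    define t2 where "t2 = tt a b y"
    define t3 where "t3 = tt a b z"
    have x1: "1 \<le> x" and y1: "1 \<le> y" using x y by auto
    have z1: "1 \<le> z" using x1 z_def by simp
    note Lx = L1[OF a x1, folded r1_def t1_def]
    note Ly = L1[OF a y1, folded r2_def t2_def]
    note Lz = L1[OF a z1, folded r3_def t3_def]
    have A1: "r1 \<in> A" and A2: "r2 \<in> A" using x y by (auto simp: r1_def r2_def)
    have A3: "r3 \<in> A" using z unfolding r3_def z_def by simp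
    have Q1: "t1 + 1 \<in> Q" and Q2: "t2 + 1 \<in> Q" using x y by (auto simp: t1_def t2_def)
    have Q3: "t3 + 1 \<in> Q" using z unfolding t3_def z_def by simp
    have "x + y = t1*a + r1 + (t2*a + r2)" using Lx(1) Ly(1) by simp
    then have ez: "z = (t1+t2)*a + (r1+r2)" unfolding z_def by (simp add: algebra_simps)
    have r12: "r1 + r2 \<le> 2*a + 2*b" using Lx(3) Ly(3) by simp
    show False
    proof (cases "r1 + r2 \<le> b")
      case True
      then have "x = r1" "y = r2" using Lx(4) Ly(4) by auto
      then have "z \<le> a+b" using True z_def by simp
      then have "r3 = z" using Lz(5) by simp
      then show False using W A1 A2 A3 ne z_def \<open>x = r1\<close> \<open>y = r2\<close> unfolding weakly_sum_free_def by blast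
    next
      case False
      show False
      proof (cases "r1 + r2 \<le> a + b")
        case True
        then have "r3 = r1 + r2" using L3[OF a _ _ ez] False r3_def by simp
        show False
        proof (cases "r1 = r2")
          case False
          then show False using W A1 A2 A3 \<open>r3 = r1 + r2\<close> unfolding weakly_sum_free_def by blast
        next
          case True
          show False
          proof (cases "r1 \<le> b")
            case True
            then have "x = r1" "y = r2" using Lx(4) Ly(4) \<open>r1 = r2\<close> by auto
            then show False using ne \<open>r1 = r2\<close> by simp
          next
            case False
            then have "r1 \<in> A - {1..b}" "r2 \<in> A - {1..b}" "r3 \<in> A - {1..b}"
              using A1 A2 A3 \<open>r1 = r2\<close> \<open>r3 = r1 + r2\<close> by auto
            then show False using S \<open>r3 = r1 + r2\<close> unfolding sum_free_def by blast
          qed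
        qed
      next
        case F2: False
        show False
        proof (cases "r1 + r2 \<le> 2*a + b")
          case True
          have "z = (t1+t2+1)*a + (r1+r2-a)" using ez F2 by (simp add: algebra_simps)
          then have "t3 = t1+t2+1" using L3[OF a, of "r1+r2-a" z "t1+t2+1"] F2 True t3_def by simp
          then have "t3 + 1 = (t1+1) + (t2+1)" by simp
          then show False using Q Q1 Q2 Q3 unfolding sum_free_def by metis
        next
          case False
          have "z = (t1+t2+2)*a + (r1+r2-2*a)" using ez False by (simp add: algebra_simps)
          then have "r3 = r1+r2-2*a" using L3[OF a, of "r1+r2-2*a" z "t1+t2+2"] False r12 a r3_def by simp
          then show False using iii A1 A2 A3 False by auto
        qed
      qed
    qed
  qed
qed

theorem theorem3p17:
  fixes a n b p k :: nat
  assumes "0 < a" "0 < n" "0 < b" "0 < p" "0 < k" "a > b"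
    and "\<exists>P. is_partition {1..p} k P \<and> (\<forall>i\<in>{1..k}. sum_free (P i))"
    and "\<exists>A. WS_template b a (n + 1) A"
  shows "\<exists>C. is_partition {1..p*a+b} (k + n) C \<and> (\<forall>i\<in>{1..k+n}. weakly_sum_free (C i))"
proof -
  obtain P where PP: "is_partition {1..p} k P" and PS: "\<forall>i\<in>{1..k}. sum_free (P i)" using assms(7) by blast
  obtain A where AT: "WS_template b a (n + 1) A" using assms(8) by blast
  have a: "0 < a" "b < a" using assms by auto
  have Apart: "is_partition {1..a+b} (n+1) A"
    and AW: "\<forall>i\<in>{1..n+1}. weakly_sum_free (A i)"
    and AS: "\<forall>i\<in>{1..n+1}. sum_free (A i - {1..b})"
    and A3: "\<forall>x\<in>A (n+1). \<forall>y\<in>A (n+1). x + y > b + 2*a \<longrightarrow> x + y - 2*a \<notin> A (n+1)"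
    and A4: "\<forall>i\<in>{1..n}. \<forall>x\<in>A i. \<forall>y\<in>A i. x + y > a + b \<longrightarrow> pi_map a b (x + y) \<notin> A i"
    using AT unfolding WS_template_def by auto
  define N where "N = p*a+b"
  define C where "C i = (if i \<le> k then {x\<in>{1..N}. rr a b x \<in> A (n+1) \<and> tt a b x + 1 \<in> P i}
      else {x\<in>{1..N}. rr a b x \<in> A (i-k)})" for i
  have "is_partition {1..N} (k + n) C"
    unfolding is_partition_def
  proof (intro conjI ballI impI)
    show "(\<Union>i\<in>{1..k+n}. C i) = {1..N}"
    proof
      show "(\<Union>i\<in>{1..k+n}. C i) \<subseteq> {1..N}" unfolding C_def by auto
    next
      show "{1..N} \<subseteq> (\<Union>i\<in>{1..k+n}. C i)"
      proof
        fix x assume x: "x \<in> {1..N}"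
        have "1 \<le> rr a b x" "rr a b x \<le> a+b" using L1[OF a] x by auto
        then have "rr a b x \<in> (\<Union>j\<in>{1..n+1}. A j)" using Apart unfolding is_partition_def by auto
        then obtain j where j: "j \<in> {1..n+1}" "rr a b x \<in> A j" by blast
        show "x \<in> (\<Union>i\<in>{1..k+n}. C i)"
        proof (cases "j = n+1")
          case True
          have "tt a b x < p" using L2[OF a, of x p] x assms N_def by auto
          then have "tt a b x + 1 \<in> (\<Union>i\<in>{1..k}. P i)" using PP unfolding is_partition_def by auto
          then obtain i where i: "i \<in> {1..k}" "tt a b x + 1 \<in> P i" by blast
          then have "x \<in> C i" using x j True unfolding C_def by auto
          then show ?thesis using i by auto
        next
          case False
          then have "x \<in> C (k+j)" using x j unfolding C_def by auto
          then show ?thesis using j False by (intro UN_I[of "k+j"]) auto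
        qed
      qed
    qed
  next
    fix i j assume ij: "i \<in> {1..k+n}" "j \<in> {1..k+n}" "i \<noteq> j"
    have Pd: "\<forall>i\<in>{1..k}. \<forall>j\<in>{1..k}. i \<noteq> j \<longrightarrow> P i \<inter> P j = {}" using PP unfolding is_partition_def by blast
    have Ad: "\<forall>i\<in>{1..n+1}. \<forall>j\<in>{1..n+1}. i \<noteq> j \<longrightarrow> A i \<inter> A j = {}" using Apart unfolding is_partition_def by blast
    show "C i \<inter> C j = {}"
    proof (cases "i \<le> k")
      case True
      show ?thesis
      proof (cases "j \<le> k")
        case True
        have "P i \<inter> P j = {}" using Pd ij \<open>i \<le> k\<close> True by auto
        then show ?thesis using True \<open>i \<le> k\<close> unfolding C_def by auto
      next
        case False
        have "A (n+1) \<inter> A (j-k) = {}" apply (rule Ad[rule_format, of "n+1" "j-k"]) using ij False by auto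
        then show ?thesis using False \<open>i \<le> k\<close> unfolding C_def by auto
      qed
    next
      case F: False
      show ?thesis
      proof (cases "j \<le> k")
        case True
        have "A (n+1) \<inter> A (i-k) = {}" apply (rule Ad[rule_format, of "n+1" "i-k"]) using ij F by auto
        then show ?thesis using F True unfolding C_def by auto
      next
        case False
        have "A (i-k) \<inter> A (j-k) = {}" apply (rule Ad[rule_format, of "i-k" "j-k"]) using ij F False by auto
        then show ?thesis using F False unfolding C_def by auto
      qed
    qed
  qed
  moreover have "\<forall>i\<in>{1..k+n}. weakly_sum_free (C i)"
  proof
    fix i assume i: "i \<in> {1..k+n}"
    show "weakly_sum_free (C i)"
    proof (cases "i \<le> k")
      case True
      have "weakly_sum_free {x\<in>{1..N}. rr a b x \<in> A (n+1) \<and> tt a b x + 1 \<in> P i}"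
        apply (rule main_wsf[OF a])
        using AW AS A3 PS i True by auto
      then show ?thesis using True unfolding C_def by simp
    next
      case False
      have "weakly_sum_free {x\<in>{1..N}. rr a b x \<in> A (i-k)}"
      proof -
        have ik: "i-k \<in> {1..n}" "i-k \<in> {1..n+1}" using i False by auto
        show ?thesis
          by (rule extra_wsf[OF a bspec[OF AW ik(2)] bspec[OF AS ik(2)] bspec[OF A4 ik(1)]])
      qed
      then show ?thesis using False unfolding C_def by simp
    qed
  qed
  ultimately show ?thesis unfolding N_def by blast
qed

end
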